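(* Let $f:\mathbb{R}^n\times\mathbb{R}^m\times\mathbb{N}\to\mathbb{R}^n$ be smooth and suppose that for every $t\ge 0$ there is $L_t>0$ with $\|f(x,d,t)-f(y,d,t)\|\le L_t\|x-y\|$ for all $x,y\in\mathbb{R}^n$, $d\in\mathbb{R}^m$. Let $(w_t)_{t\ge0}$ be independent random vectors in $\mathbb{R}^n$ with $w_t\sim subG(\sigma_t^2)$ for some finite $\sigma_t>0$. Consider the stochastic system $X_{t+1}=f(X_t,d_t,t)+w_t$ and the deterministic system $x_{t+1}=f(x_t,d_t,t)$, and let $X_t$ and $x_t$ be trajectories of these systems with the same initial state $X_0=x_0\in\mathcal{X}_0$ and the same inputs $d_t\in\mathcal{D}$ for $t\le T$, where $T\in\mathbb{N}_+$. For $\delta\in(0,1]$ and $\varepsilon\in(0,1)$ define $$r_{\delta,t}=\sqrt{\Psi_t\big(\varepsilon_1 n+\varepsilon_2\log(T/\delta)\big)},\quad \Psi_t=\psi_{t-1}\sum_{k=0}^{t-1}\sigma_k^2\psi_k^{-1},\quad \psi_t=\prod_{k=0}^{t}L_k^2,$$ $$\varepsilon_1=\frac{2\log(1+2/\varepsilon)}{(1-\varepsilon)^2},\qquad \varepsilon_2=\frac{2}{(1-\varepsilon)^2}$$ (with $\psi_{-1}=1$ and empty sums equal to $0$). Then $$\mathbb{P}\big(\|X_t-x_t\|\le r_{\delta,t}\ \text{for all } t\le T\big)\ge 1-\delta.$$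
   Context: $\|\cdot\|$ is the Euclidean norm and $\langle\cdot,\cdot\rangle$ the standard inner product. A random vector $X\in\mathbb{R}^n$ is sub-Gaussian with variance proxy $\sigma^2$, written $X\sim subG(\sigma^2)$, if $\mathbb{E}(X)=0$ and for every unit vector $\ell\in\mathcal{S}^{n-1}$ and every $\lambda\in\mathbb{R}$, $\mathbb{E}\big(e^{\lambda\langle \ell,X\rangle}\big)\le e^{\lambda^2\sigma^2/2}$. $\mathcal{X}_0\subseteq\mathbb{R}^n$ and $\mathcal{D}\subseteq\mathbb{R}^m$ are arbitrary sets of initial states and inputs. *)

theory Defs
  imports "HOL-Analysis.Analysis" "HOL-Probability.Probability"
begin

fun iter_deriv :: "('a::real_normed_vector \<Rightarrow> 'b::real_normed_vector) \<Rightarrow> 'a list \<Rightarrow> 'a \<Rightarrow> 'b" where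
  "iter_deriv f [] = f"
| "iter_deriv f (v # vs) = (\<lambda>x. frechet_derivative (iter_deriv f vs) (at x) v)"

text \<open>Smooth (C-infinity) map on a finite-dimensional space: all iterated derivatives
  exist everywhere (each is Frechet differentiable, hence continuous).\<close>
definition smooth_map :: "('a::euclidean_space \<Rightarrow> 'b::real_normed_vector) \<Rightarrow> bool" where
  "smooth_map f \<longleftrightarrow> (\<forall>vs x. iter_deriv f vs differentiable (at x))"

definition subG :: "'a measure \<Rightarrow> ('a \<Rightarrow> 'n::euclidean_space) \<Rightarrow> real \<Rightarrow> bool" where
  "subG M X s2 \<longleftrightarrow> integrable M X \<and> (\<integral>\<omega>. X \<omega> \<partial>M) = 0 \<and>
     (\<forall>l::'n. norm l = 1 \<longrightarrow> (\<forall>c::real.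
        (\<integral>\<^sup>+\<omega>. ennreal (exp (c * (l \<bullet> X \<omega>))) \<partial>M) \<le> ennreal (exp (c^2 * s2 / 2))))"

definition psi :: "(nat \<Rightarrow> real) \<Rightarrow> nat \<Rightarrow> real" where
  "psi L t = (\<Prod>k\<le>t. (L k)^2)"

text \<open>Psi L \<sigma> t = psi_{t-1} * sum_{k<t} \<sigma>_k^2 / psi_k, with psi_{-1} = 1.\<close>
definition Psi :: "(nat \<Rightarrow> real) \<Rightarrow> (nat \<Rightarrow> real) \<Rightarrow> nat \<Rightarrow> real" where
  "Psi L \<sigma> t = (\<Prod>k<t. (L k)^2) * (\<Sum>k<t. (\<sigma> k)^2 / psi L k)"

definition eps1 :: "real \<Rightarrow> real" where
  "eps1 \<epsilon> = 2 * ln (1 + 2 / \<epsilon>) / (1 - \<epsilon>)^2"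

definition eps2 :: "real \<Rightarrow> real" where
  "eps2 \<epsilon> = 2 / (1 - \<epsilon>)^2"

definition radius :: "(nat \<Rightarrow> real) \<Rightarrow> (nat \<Rightarrow> real) \<Rightarrow> nat \<Rightarrow> real \<Rightarrow> real \<Rightarrow> nat \<Rightarrow> nat \<Rightarrow> real" where
  "radius L \<sigma> n \<epsilon> \<delta> T t = sqrt (Psi L \<sigma> t * (eps1 \<epsilon> * real n + eps2 \<epsilon> * ln (real T / \<delta>)))"

end

theory Submission imports Defs begin

lemma gauss1: "(\<integral>\<^sup>+x. ennreal (exp (- x\<^sup>2 / 2)) \<partial>lborel) = ennreal (sqrt (2*pi))"
proof -
  have "(\<integral>\<^sup>+x. ennreal (normal_density 0 1 x) \<partial>lborel) = ennreal 1"
    by (subst nn_integral_eq_integral) auto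
  moreover have "\<And>x. ennreal (exp (- x\<^sup>2 / 2)) = ennreal (sqrt (2*pi)) * ennreal (normal_density 0 1 x)"
    by (simp add: normal_density_def ennreal_mult'[symmetric] field_simps)
  ultimately show ?thesis
    by (simp add: nn_integral_cmult)
qed

lemma norm_sq_sum: "(norm (h::'n::euclidean_space))\<^sup>2 = (\<Sum>b\<in>Basis. (h \<bullet> b)\<^sup>2)"
  unfolding power2_norm_eq_inner euclidean_inner[of h h] by (simp only: power2_eq_square)

lemma gaussn: "(\<integral>\<^sup>+h. ennreal (exp (- (norm (h::'n::euclidean_space))\<^sup>2 / 2)) \<partial>lborel)
   = ennreal (sqrt (2*pi) ^ DIM('n))"
proof -
  have eq: "\<And>h::'n. ennreal (exp (- (norm h)\<^sup>2 / 2)) = (\<Prod>b\<in>Basis. ennreal (exp (- (h \<bullet> b)\<^sup>2 / 2)))"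
    by (simp add: norm_sq_sum prod_ennreal exp_sum[symmetric] sum_divide_distrib sum_negf)
  have "(\<integral>\<^sup>+h. ennreal (exp (- (norm (h::'n))\<^sup>2 / 2)) \<partial>lborel)
     = (\<integral>\<^sup>+h. (\<Prod>b\<in>(Basis::'n set). ennreal (exp (- (h \<bullet> b)\<^sup>2 / 2))) \<partial>lborel)"
    by (simp only: eq)
  also have "\<dots> = (\<Prod>b\<in>(Basis::'n set). (\<integral>\<^sup>+x. ennreal (exp (- x\<^sup>2 / 2)) \<partial>lborel))"
    by (rule nn_integral_lborel_prod[where f="\<lambda>b x. ennreal (exp (- x\<^sup>2 / 2))"]) auto
  also have "\<dots> = ennreal (sqrt (2*pi) ^ DIM('n))"
    by (subst gauss1) (simp add: ennreal_power)
  finally show ?thesis .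
qed

lemma gauss_shift:
  fixes v :: "'n::euclidean_space" assumes c: "c > 0"
  shows "(\<integral>\<^sup>+h. ennreal (exp (h \<bullet> v - c * (norm h)\<^sup>2 / 2)) \<partial>lborel)
     = ennreal (sqrt (2*pi) ^ DIM('n) * c powr (- real DIM('n) / 2) * exp ((norm v)\<^sup>2 / (2*c)))"
proof -
  define k where "k = 1 / sqrt c"
  have k: "k > 0" "k\<^sup>2 = 1/c" using c by (auto simp: k_def power_divide)
  have kk: "c * (k * k) = 1" using k c by (simp add: power2_eq_square field_simps)
  define F where "F = (\<lambda>h::'n. ennreal (exp (h \<bullet> v - c * (norm h)\<^sup>2 / 2)))"
  have [measurable]: "F \<in> borel_measurable borel" unfolding F_def by measurable
  have aff: "(lborel::'n measure) = density (distr lborel borel (\<lambda>x. (1/c) *\<^sub>R v + k *\<^sub>R x)) (\<lambda>_. \<bar>k\<bar>^DIM('n))"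
    using k by (intro lborel_affine) auto
  have "(\<integral>\<^sup>+h. F h \<partial>lborel) = (\<integral>\<^sup>+h. F h \<partial>(density (distr lborel borel (\<lambda>x. (1/c) *\<^sub>R v + k *\<^sub>R x)) (\<lambda>_. \<bar>k\<bar>^DIM('n))))"
    by (rule arg_cong[where f="\<lambda>N. integral\<^sup>N N F", OF aff])
  also have "\<dots> = (\<integral>\<^sup>+x. ennreal (k^DIM('n)) * F ((1/c) *\<^sub>R v + k *\<^sub>R x) \<partial>lborel)"
    using k by (simp add: nn_integral_density nn_integral_distr)
  also have "\<dots> = (\<integral>\<^sup>+(x::'n). ennreal (k^DIM('n) * exp ((norm v)\<^sup>2 / (2*c))) * ennreal (exp (- (norm x)\<^sup>2 / 2)) \<partial>lborel)"
  proof -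
    have pt: "ennreal (k^DIM('n)) * F ((1/c) *\<^sub>R v + k *\<^sub>R x) =
        ennreal (k^DIM('n) * exp ((norm v)\<^sup>2 / (2*c))) * ennreal (exp (- (norm x)\<^sup>2 / 2))" for x :: 'n
    proof -
      have n2: "(norm ((1/c) *\<^sub>R v + k *\<^sub>R x))\<^sup>2 = (v \<bullet> v)/c\<^sup>2 + 2*(k/c)*(x \<bullet> v) + k\<^sup>2 * (x \<bullet> x)"
        unfolding power2_norm_eq_inner
        by (simp add: inner_add_left inner_add_right inner_commute power2_eq_square algebra_simps)
      have "((1/c) *\<^sub>R v + k *\<^sub>R x) \<bullet> v - c * (norm ((1/c) *\<^sub>R v + k *\<^sub>R x))\<^sup>2 / 2
          = (norm v)\<^sup>2 / (2*c) - (norm x)\<^sup>2 / 2"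
        unfolding n2 k(2) power2_norm_eq_inner using c kk
        by (simp add: inner_add_left inner_add_right inner_commute field_simps power2_eq_square)
      then show ?thesis
        using k unfolding F_def
        by (simp add: ennreal_mult'[symmetric] exp_add[symmetric] exp_diff mult.assoc)
    qed
    show ?thesis by (simp add: pt del: exp_minus)
  qed
  also have "\<dots> = ennreal (k^DIM('n) * exp ((norm v)\<^sup>2 / (2*c))) * ennreal (sqrt (2*pi) ^ DIM('n))"
    using gaussn[where 'n='n] by (simp add: nn_integral_cmult)
  also have "\<dots> = ennreal (sqrt (2*pi) ^ DIM('n) * c powr (- real DIM('n) / 2) * exp ((norm v)\<^sup>2 / (2*c)))"
  proof -
    have "k^DIM('n) = c powr (- real DIM('n) / 2)"
      using c unfolding k_def
      by (simp add: powr_half_sqrt[symmetric] powr_minus_divide[symmetric] powr_realpow[symmetric] powr_powr)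
    then show ?thesis using k by (simp add: ennreal_mult'[symmetric] mult_ac)
  qed
  finally show ?thesis unfolding F_def .
qed

lemma subG_mgf:
  assumes M: "prob_space M" and sg: "subG M w s2"
  shows "(\<integral>\<^sup>+\<omega>. ennreal (exp (h \<bullet> w \<omega>)) \<partial>M) \<le> ennreal (exp (s2 * (norm h)\<^sup>2 / 2))"
proof (cases "h = 0")
  case True
  then show ?thesis using M by (simp add: prob_space.emeasure_space_1)
next
  case False
  define l where "l = (1 / norm h) *\<^sub>R h"
  have l: "norm l = 1" using False by (simp add: l_def)
  have "\<And>x. norm h * (l \<bullet> x) = h \<bullet> x" using False by (simp add: l_def)
  then show ?thesis
    using sg l unfolding subG_def
    by (auto dest!: spec[of _ l] spec[of _ "norm h"] simp: mult_ac)
qed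

lemma subG_quad:
  fixes w :: "'a \<Rightarrow> 'n::euclidean_space"
  assumes M: "prob_space M" and sg: "subG M w s2" and s: "s > 0" "s * s2 < 1"
  shows "(\<integral>\<^sup>+\<omega>. ennreal (exp (s * (norm (a + w \<omega>))\<^sup>2 / 2)) \<partial>M)
     \<le> ennreal ((1 - s * s2) powr (- real DIM('n)/2) * exp (s / (1 - s * s2) * (norm a)\<^sup>2 / 2))"
proof -
  interpret prob_space M by fact
  have wm[measurable]: "w \<in> borel_measurable M" using sg unfolding subG_def by auto
  define C where "C = sqrt(2*pi)^DIM('n)"
  define n where "n = real DIM('n)"
  have C: "C > 0" by (simp add: C_def)
  define K where "K = C * (1/s) powr (-n/2)"
  have K: "K > 0" using C s by (simp add: K_def)
  have c': "1/s - s2 > 0" using s by (simp add: field_simps)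
  have key: "ennreal K * ennreal (exp (s*(norm (a+y))\<^sup>2/2)) =
      (\<integral>\<^sup>+h. ennreal (exp (h \<bullet> (a+y) - (1/s) * (norm h)\<^sup>2/2)) \<partial>lborel)" for y
    using gauss_shift[of "1/s" "a+y"] s K
    by (simp add: K_def C_def n_def ennreal_mult'[symmetric] field_simps)
  have "ennreal K * (\<integral>\<^sup>+\<omega>. ennreal (exp (s*(norm (a + w \<omega>))\<^sup>2/2)) \<partial>M)
      = (\<integral>\<^sup>+\<omega>. ennreal K * ennreal (exp (s*(norm (a + w \<omega>))\<^sup>2/2)) \<partial>M)"
    by (rule nn_integral_cmult[symmetric]) measurable
  also have "\<dots> = (\<integral>\<^sup>+\<omega>. (\<integral>\<^sup>+h. ennreal (exp (h \<bullet> (a + w \<omega>) - (1/s) * (norm h)\<^sup>2/2)) \<partial>lborel) \<partial>M)"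
    using key by simp
  also have "\<dots> = (\<integral>\<^sup>+h. (\<integral>\<^sup>+\<omega>. ennreal (exp (h \<bullet> (a + w \<omega>) - (1/s) * (norm h)\<^sup>2/2)) \<partial>M) \<partial>lborel)"
  proof -
    interpret pair_sigma_finite lborel M
      by (simp add: pair_sigma_finite_def lborel.sigma_finite_measure_axioms prob_space_imp_sigma_finite M)
    show ?thesis by (rule Fubini') measurable
  qed
  also have "\<dots> \<le> (\<integral>\<^sup>+h. ennreal (exp (h \<bullet> a - (1/s - s2) * (norm h)\<^sup>2/2)) \<partial>lborel)"
  proof (rule nn_integral_mono)
    fix h :: 'n
    have "(\<integral>\<^sup>+\<omega>. ennreal (exp (h \<bullet> (a + w \<omega>) - (1/s) * (norm h)\<^sup>2/2)) \<partial>M)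
       = (\<integral>\<^sup>+\<omega>. ennreal (exp (h \<bullet> a - (1/s) * (norm h)\<^sup>2/2)) * ennreal (exp (h \<bullet> w \<omega>)) \<partial>M)"
      by (intro nn_integral_cong) (simp add: ennreal_mult'[symmetric] exp_add[symmetric] inner_add_right)
    also have "\<dots> = ennreal (exp (h \<bullet> a - (1/s) * (norm h)\<^sup>2/2)) * (\<integral>\<^sup>+\<omega>. ennreal (exp (h \<bullet> w \<omega>)) \<partial>M)"
      by (rule nn_integral_cmult) measurable
    also have "\<dots> \<le> ennreal (exp (h \<bullet> a - (1/s) * (norm h)\<^sup>2/2)) * ennreal (exp (s2 * (norm h)\<^sup>2 / 2))"
      by (intro mult_left_mono subG_mgf[OF M sg]) auto
    also have "\<dots> = ennreal (exp (h \<bullet> a - (1/s - s2) * (norm h)\<^sup>2/2))"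
      by (simp add: ennreal_mult'[symmetric] exp_add[symmetric] algebra_simps diff_divide_distrib add_divide_distrib)
    finally show "(\<integral>\<^sup>+\<omega>. ennreal (exp (h \<bullet> (a + w \<omega>) - (1/s) * (norm h)\<^sup>2/2)) \<partial>M)
       \<le> ennreal (exp (h \<bullet> a - (1/s - s2) * (norm h)\<^sup>2/2))" .
  qed
  also have "\<dots> = ennreal (C * (1/s - s2) powr (-n/2) * exp ((norm a)\<^sup>2 / (2*(1/s - s2))))"
    using gauss_shift[OF c', of a] by (simp add: C_def n_def)
  also have "\<dots> = ennreal K * ennreal ((1 - s * s2) powr (-n/2) * exp (s / (1 - s * s2) * (norm a)\<^sup>2 / 2))"
  proof -
    have "(1/s - s2) powr (-n/2) = (1/s) powr (-n/2) * (1 - s * s2) powr (-n/2)"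
      using s by (subst powr_mult[symmetric]) (auto simp: field_simps)
    moreover have "(norm a)\<^sup>2 / (2*(1/s - s2)) = s / (1 - s * s2) * (norm a)\<^sup>2 / 2"
      using s by (simp add: field_simps)
    ultimately show ?thesis using K
      by (simp add: K_def ennreal_mult'[symmetric] mult_ac)
  qed
  finally show ?thesis
    using K by (subst (asm) ennreal_mult_le_mult_iff) (auto simp: n_def)
qed


primrec Phi :: "('n \<Rightarrow> 'm \<Rightarrow> nat \<Rightarrow> 'n::euclidean_space) \<Rightarrow> (nat \<Rightarrow> 'm) \<Rightarrow> 'n \<Rightarrow> nat \<Rightarrow> (nat \<Rightarrow> 'n) \<Rightarrow> 'n" where
  "Phi f d x0 0 v = x0"
| "Phi f d x0 (Suc t) v = f (Phi f d x0 t v) (d t) t + v t"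

lemma Phi_local: "(\<And>k. k < t \<Longrightarrow> v k = v' k) \<Longrightarrow> Phi f d x0 t v = Phi f d x0 t v'"
  by (induction t) auto

lemma Phi_meas:
  assumes cont: "\<And>t. continuous_on UNIV (\<lambda>y. f y (d t) t)"
  shows "Phi f d x0 t \<in> borel_measurable (PiM {..<t} (\<lambda>_. borel))"
proof (induction t)
  case 0
  show ?case by simp
next
  case (Suc t)
  have g: "(\<lambda>y. f y (d t) t) \<in> borel_measurable borel"
    using cont by (rule borel_measurable_continuous_onI)
  have r: "(\<lambda>v. restrict v {..<t}) \<in> measurable (PiM {..<Suc t} (\<lambda>_. borel)) (PiM {..<t} (\<lambda>_. (borel::'a measure)))"
    by (rule measurable_restrict_subset) auto
  have 1: "(\<lambda>v. Phi f d x0 t (restrict v {..<t})) \<in> borel_measurable (PiM {..<Suc t} (\<lambda>_. borel))"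
    using measurable_comp[OF r Suc.IH] by (simp add: comp_def)
  have 2: "(\<lambda>v. v t) \<in> borel_measurable (PiM {..<Suc t} (\<lambda>_. borel))"
    by (rule measurable_component_singleton) auto
  have 3: "(\<lambda>v. f (Phi f d x0 t (restrict v {..<t})) (d t) t + v t) \<in> borel_measurable (PiM {..<Suc t} (\<lambda>_. borel))"
    using measurable_comp[OF 1 g] 2 by (intro borel_measurable_add) (auto simp: comp_def)
  moreover have "Phi f d x0 (Suc t) v = f (Phi f d x0 t (restrict v {..<t})) (d t) t + v t" for v
  proof -
    have "Phi f d x0 t (restrict v {..<t}) = Phi f d x0 t v" by (rule Phi_local) simp
    then show ?thesis by simp
  qed
  ultimately show ?case by simp
qed

lemma indep_integral:
  fixes Y Z :: "'a \<Rightarrow> 'b::topological_space"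
  assumes M: "prob_space M" and ind: "prob_space.indep_var M borel Y borel Z"
    and F[measurable]: "F \<in> borel_measurable (borel \<Otimes>\<^sub>M borel)"
  shows "(\<integral>\<^sup>+\<omega>. F (Y \<omega>, Z \<omega>) \<partial>M) = (\<integral>\<^sup>+\<omega>. (\<integral>\<^sup>+\<omega>'. F (Y \<omega>, Z \<omega>') \<partial>M) \<partial>M)"
proof -
  interpret prob_space M by fact
  have rv[measurable]: "Y \<in> borel_measurable M" "Z \<in> borel_measurable M"
    and eq: "distr M borel Y \<Otimes>\<^sub>M distr M borel Z = distr M (borel \<Otimes>\<^sub>M borel) (\<lambda>x. (Y x, Z x))"
    using ind by (auto simp: indep_var_distribution_eq)
  interpret PY: prob_space "distr M borel Y" by (rule prob_space_distr) simp
  interpret PZ: prob_space "distr M borel Z" by (rule prob_space_distr) simp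
  interpret pair_sigma_finite "distr M borel Y" "distr M borel Z"
    by (simp add: pair_sigma_finite_def PY.sigma_finite_measure_axioms PZ.sigma_finite_measure_axioms)
  have "(\<integral>\<^sup>+\<omega>. F (Y \<omega>, Z \<omega>) \<partial>M) = (\<integral>\<^sup>+p. F p \<partial>distr M (borel \<Otimes>\<^sub>M borel) (\<lambda>x. (Y x, Z x)))"
    by (subst nn_integral_distr) auto
  also have "\<dots> = (\<integral>\<^sup>+p. F p \<partial>(distr M borel Y \<Otimes>\<^sub>M distr M borel Z))"
    by (simp only: eq)
  also have "\<dots> = (\<integral>\<^sup>+y. (\<integral>\<^sup>+z. F (y, z) \<partial>distr M borel Z) \<partial>distr M borel Y)"
  proof -
    have "measurable (distr M borel Y \<Otimes>\<^sub>M distr M borel Z) (borel::ennreal measure) = measurable (borel \<Otimes>\<^sub>M borel) borel"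
      by (intro measurable_cong_sets sets_pair_measure_cong) auto
    then have "F \<in> borel_measurable (distr M borel Y \<Otimes>\<^sub>M distr M borel Z)" using F by simp
    then show ?thesis by (rule PZ.nn_integral_fst[symmetric])
  qed
  also have "\<dots> = (\<integral>\<^sup>+\<omega>. (\<integral>\<^sup>+z. F (Y \<omega>, z) \<partial>distr M borel Z) \<partial>M)"
    by (subst nn_integral_distr) auto
  also have "\<dots> = (\<integral>\<^sup>+\<omega>. (\<integral>\<^sup>+\<omega>'. F (Y \<omega>, Z \<omega>') \<partial>M) \<partial>M)"
    by (intro nn_integral_cong, subst nn_integral_distr) auto
  finally show ?thesis .
qed

lemma Psi_Suc:
  assumes L: "\<And>k. L k \<noteq> 0"
  shows "Psi L \<sigma> (Suc t) = (L t)\<^sup>2 * Psi L \<sigma> t + (\<sigma> t)\<^sup>2"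
proof -
  have p: "psi L t = (\<Prod>k<Suc t. (L k)\<^sup>2)" unfolding psi_def by (simp add: lessThan_Suc_atMost)
  have nz: "(\<Prod>k<Suc t. (L k)\<^sup>2) \<noteq> 0" using L by (simp add: prod_zero_iff)
  have "Psi L \<sigma> (Suc t) = (\<Prod>k<Suc t. (L k)\<^sup>2) * (\<Sum>k<t. (\<sigma> k)\<^sup>2 / psi L k)
       + (\<Prod>k<Suc t. (L k)\<^sup>2) * ((\<sigma> t)\<^sup>2 / psi L t)"
    unfolding Psi_def by (simp add: algebra_simps)
  also have "(\<Prod>k<Suc t. (L k)\<^sup>2) * ((\<sigma> t)\<^sup>2 / psi L t) = (\<sigma> t)\<^sup>2"
    using nz unfolding p by simp
  also have "(\<Prod>k<Suc t. (L k)\<^sup>2) * (\<Sum>k<t. (\<sigma> k)\<^sup>2 / psi L k) = (L t)\<^sup>2 * Psi L \<sigma> t"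
    unfolding Psi_def by (simp add: mult_ac)
  finally show ?thesis .
qed

lemma psi_pos: assumes "\<And>k. L k > 0" shows "psi L t > 0"
proof -
  have "0 < (L k)\<^sup>2" for k using assms[of k] by simp
  then show ?thesis unfolding psi_def by (intro prod_pos) auto
qed

lemma Psi_nonneg: assumes "\<And>k. L k > 0" shows "Psi L \<sigma> t \<ge> 0"
proof -
  have "0 \<le> (\<sigma> k)\<^sup>2 / psi L k" for k using psi_pos[of L k] assms by simp
  then show ?thesis unfolding Psi_def
    by (intro mult_nonneg_nonneg prod_nonneg sum_nonneg) auto
qed

lemma Psi_pos: assumes "\<And>k. L k > 0" "\<And>k. \<sigma> k > 0" "t \<ge> 1" shows "Psi L \<sigma> t > 0"
proof -
  have "0 < (\<sigma> k)\<^sup>2 / psi L k" for k using psi_pos[of L k] assms(1) assms(2)[of k] by simp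
  moreover have "0 < (L k)\<^sup>2" for k using assms(1)[of k] by simp
  moreover have "0 \<in> {..<t}" using assms(3) by simp
  then have "{..<t} \<noteq> {}" by blast
  ultimately show ?thesis unfolding Psi_def
    by (intro mult_pos_pos prod_pos sum_pos) auto
qed

lemma Q_nonneg:
  assumes \<epsilon>: "0 < \<epsilon>" "\<epsilon> < 1" and \<delta>: "0 < \<delta>" "\<delta> \<le> 1" and T: "T \<ge> 1"
  shows "eps1 \<epsilon> * real n + eps2 \<epsilon> * ln (real T / \<delta>) \<ge> 0"
proof -
  have lnT: "ln (real T / \<delta>) \<ge> 0" using T \<delta> by (simp add: field_simps)
  have e1: "eps1 \<epsilon> \<ge> 0" using \<epsilon> unfolding eps1_def by (intro divide_nonneg_pos) auto
  show ?thesis unfolding eps2_def using e1 lnT by (intro add_nonneg_nonneg mult_nonneg_nonneg) auto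
qed

lemma tail_real:
  fixes \<epsilon> \<delta> P :: real and T n :: nat
  assumes \<epsilon>: "0 < \<epsilon>" "\<epsilon> < 1" and \<delta>: "0 < \<delta>" "\<delta> \<le> 1" and T: "T \<ge> 1" and P: "P > 0"
  defines "u \<equiv> (1 - \<epsilon>)\<^sup>2"
  defines "Q \<equiv> eps1 \<epsilon> * real n + eps2 \<epsilon> * ln (real T / \<delta>)"
  shows "exp (- (u / P) * (sqrt (P * Q))\<^sup>2 / 2) * (1 - u) powr (- real n / 2) \<le> \<delta> / real T"
proof -
  have u0: "0 < u" using \<epsilon> by (simp add: u_def)
  have "(1-\<epsilon>)*(1-\<epsilon>) < 1 * 1" by (rule mult_strict_mono) (use \<epsilon> in auto)
  then have u1: "u < 1" by (simp add: u_def power2_eq_square)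
  have u2: "1 - u = \<epsilon> * (2 - \<epsilon>)" by (simp add: u_def power2_eq_square algebra_simps)
  note u = u0 u1 u2
  have lnT: "ln (real T / \<delta>) \<ge> 0" using T \<delta> by (simp add: field_simps)
  have e1: "eps1 \<epsilon> \<ge> 0" using \<epsilon> unfolding eps1_def by (intro divide_nonneg_pos) auto
  have Q: "Q \<ge> 0" unfolding Q_def eps2_def using e1 lnT by (intro add_nonneg_nonneg mult_nonneg_nonneg) auto
  have "(u / P) * (sqrt (P * Q))\<^sup>2 / 2 = u * Q / 2" using P Q by simp
  also have "\<dots> = real n * ln (1 + 2/\<epsilon>) + ln (real T / \<delta>)"
    using \<epsilon> unfolding Q_def eps1_def eps2_def u_def by (simp add: field_simps)
  finally have A: "(u / P) * (sqrt (P * Q))\<^sup>2 / 2 = real n * ln (1 + 2/\<epsilon>) + ln (real T / \<delta>)" .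
  have B: "(1 - u) powr (- real n / 2) = exp (- real n / 2 * ln (1 - u))"
    using u \<epsilon> by (simp add: powr_def)
  have C: "- ln (1 - u) \<le> 2 * ln (1 + 2/\<epsilon>)"
  proof -
    have pos: "1 + 2/\<epsilon> > 0" using \<epsilon> by (intro add_pos_pos) auto
    have "1 \<le> (1 - u) * (1 + 2/\<epsilon>)\<^sup>2"
    proof -
      have "(1 - u) * (1 + 2/\<epsilon>)\<^sup>2 = (2 - \<epsilon>) * (\<epsilon> + 2)\<^sup>2 / \<epsilon>"
        using \<epsilon> unfolding u(3) by (simp add: field_simps power2_eq_square)
      also have "\<dots> \<ge> 1"
      proof -
        have "2\<^sup>2 \<le> (\<epsilon> + 2)\<^sup>2" using \<epsilon> by (intro power_mono) auto
        then have "1 * 4 \<le> (2 - \<epsilon>) * (\<epsilon> + 2)\<^sup>2" using \<epsilon> by (intro mult_mono) auto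
        then have "(2 - \<epsilon>) * (\<epsilon> + 2)\<^sup>2 \<ge> \<epsilon>" using \<epsilon> by simp
        then show ?thesis using \<epsilon> by (simp add: field_simps)
      qed
      finally show ?thesis .
    qed
    then have "0 \<le> ln ((1 - u) * (1 + 2/\<epsilon>)\<^sup>2)" by simp
    also have "\<dots> = ln (1 - u) + 2 * ln (1 + 2/\<epsilon>)"
      using u pos \<epsilon> by (simp add: ln_mult ln_realpow)
    finally show ?thesis by simp
  qed
  have "exp (- (u / P) * (sqrt (P * Q))\<^sup>2 / 2) * (1 - u) powr (- real n / 2)
      = exp (- (real n * ln (1 + 2/\<epsilon>) + ln (real T / \<delta>)) + (- real n / 2 * ln (1 - u)))"
  proof -
    have A': "- (u / P) * (sqrt (P * Q))\<^sup>2 / 2 = - (real n * ln (1 + 2/\<epsilon>) + ln (real T / \<delta>))"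
      unfolding A[symmetric] by simp
    show ?thesis by (simp only: B A' exp_add[symmetric])
  qed
  also have "\<dots> \<le> exp (- ln (real T / \<delta>))"
  proof -
    have "real n * (- ln (1 - u)) \<le> real n * (2 * ln (1 + 2/\<epsilon>))"
      using C by (intro mult_left_mono) auto
    then show ?thesis by (simp add: algebra_simps)
  qed
  also have "\<dots> = \<delta> / real T" using T \<delta> by (simp add: ln_div exp_diff)
  finally show ?thesis .
qed


theorem theorem2:
  fixes M :: "'a measure"
    and f :: "'n::euclidean_space \<Rightarrow> 'm::euclidean_space \<Rightarrow> nat \<Rightarrow> 'n"
    and L \<sigma> :: "nat \<Rightarrow> real"
    and w X :: "nat \<Rightarrow> 'a \<Rightarrow> 'n"
    and x :: "nat \<Rightarrow> 'n"
    and d :: "nat \<Rightarrow> 'm"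
    and X0 :: "'n set" and D :: "'m set"
    and x0 :: 'n and T :: nat and \<delta> \<epsilon> :: real
  assumes "prob_space M"
    and smooth: "\<And>t. smooth_map (\<lambda>(y, e). f y e t)"
    and L_pos: "\<And>t. L t > 0"
    and lip: "\<And>t y z e. norm (f y e t - f z e t) \<le> L t * norm (y - z)"
    and indep: "prob_space.indep_vars M (\<lambda>_. borel) w UNIV"
    and \<sigma>_pos: "\<And>t. \<sigma> t > 0"
    and noise: "\<And>t. subG M (w t) ((\<sigma> t)^2)"
    and T_pos: "T \<ge> 1"
    and x0: "x0 \<in> X0"
    and inputs: "\<And>t. t \<le> T \<Longrightarrow> d t \<in> D"
    and X_init: "\<And>\<omega>. \<omega> \<in> space M \<Longrightarrow> X 0 \<omega> = x0"
    and X_step: "\<And>t \<omega>. t < T \<Longrightarrow> \<omega> \<in> space M \<Longrightarrow> X (Suc t) \<omega> = f (X t \<omega>) (d t) t + w t \<omega>"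
    and x_init: "x 0 = x0"
    and x_step: "\<And>t. t < T \<Longrightarrow> x (Suc t) = f (x t) (d t) t"
    and \<delta>: "0 < \<delta>" "\<delta> \<le> 1"
    and \<epsilon>: "0 < \<epsilon>" "\<epsilon> < 1"
  shows "measure M {\<omega> \<in> space M. \<forall>t\<le>T. norm (X t \<omega> - x t) \<le> radius L \<sigma> DIM('n) \<epsilon> \<delta> T t}
           \<ge> 1 - \<delta>"
proof -
  have PM: "prob_space M" by fact
  interpret prob_space M by fact
  have wm[measurable]: "w t \<in> borel_measurable M" for t
  proof -
    have "\<forall>i\<in>UNIV. random_variable borel (w i)"
      using indep unfolding indep_vars_def by (rule conjunct1)
    then show ?thesis by simp
  qed
  have cont: "continuous_on UNIV (\<lambda>y. f y e t)" for t e
  proof -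
    have "lipschitz_on (L t) UNIV (\<lambda>y. f y e t)"
      using lip L_pos[of t] by (auto simp: lipschitz_on_def dist_norm less_imp_le)
    then show ?thesis by (rule lipschitz_on_continuous_on)
  qed
  have fm[measurable]: "(\<lambda>y. f y e t) \<in> borel_measurable borel" for t e
    using cont by (rule borel_measurable_continuous_onI)
  define Xp where "Xp t \<omega> = Phi f d x0 t (\<lambda>k. w k \<omega>)" for t \<omega>
  have Xp0: "Xp 0 \<omega> = x0" and XpS: "Xp (Suc t) \<omega> = f (Xp t \<omega>) (d t) t + w t \<omega>" for t \<omega>
    by (simp_all add: Xp_def)
  have XXp: "t \<le> T \<Longrightarrow> \<omega> \<in> space M \<Longrightarrow> X t \<omega> = Xp t \<omega>" for t \<omega>
    by (induction t) (auto simp: Xp0 XpS X_init X_step)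
  have Xpm[measurable]: "Xp t \<in> borel_measurable M" for t
  proof (induction t)
    case 0
    show ?case by (simp add: Xp0[abs_def])
  next
    case (Suc t)
    have e: "Xp (Suc t) = (\<lambda>\<omega>. f (Xp t \<omega>) (d t) t + w t \<omega>)" by (simp add: fun_eq_iff XpS)
    have "(\<lambda>\<omega>. f (Xp t \<omega>) (d t) t) \<in> borel_measurable M"
      using measurable_compose[OF Suc.IH fm] by simp
    then show ?case unfolding e by (intro borel_measurable_add) auto
  qed
  have ind: "indep_var borel (Xp t) borel (w t)" for t
  proof -
    have i1: "indep_var (PiM {..<t} (\<lambda>_. borel)) (\<lambda>\<omega>. restrict (\<lambda>i. w i \<omega>) {..<t})
                        (PiM {t} (\<lambda>_. borel)) (\<lambda>\<omega>. restrict (\<lambda>i. w i \<omega>) {t})"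
      by (rule indep_var_restrict[OF indep]) auto
    have m2: "(\<lambda>v. v t) \<in> measurable (PiM {t} (\<lambda>_. borel)) (borel::'n measure)"
      by (rule measurable_component_singleton) simp
    have m1: "Phi f d x0 t \<in> borel_measurable (PiM {..<t} (\<lambda>_. borel))"
      by (rule Phi_meas) (rule cont)
    note i2 = indep_var_compose[OF i1 m1 m2]
    have e1: "Phi f d x0 t \<circ> (\<lambda>\<omega>. restrict (\<lambda>i. w i \<omega>) {..<t}) = Xp t"
    proof (rule ext)
      fix \<omega>
      show "(Phi f d x0 t \<circ> (\<lambda>\<omega>. restrict (\<lambda>i. w i \<omega>) {..<t})) \<omega> = Xp t \<omega>"
        unfolding comp_def Xp_def by (rule Phi_local) simp
    qed
    have e2: "(\<lambda>v. v t) \<circ> (\<lambda>\<omega>. restrict (\<lambda>i. w i \<omega>) {t}) = w t"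
      by (auto simp: fun_eq_iff)
    show ?thesis using i2 unfolding e1 e2 .
  qed
  have step: "(\<integral>\<^sup>+\<omega>. ennreal (exp (s * (norm (Xp (Suc t) \<omega> - x (Suc t)))\<^sup>2 / 2)) \<partial>M)
       \<le> ennreal ((1 - s * (\<sigma> t)\<^sup>2) powr (- real DIM('n) / 2)) *
         (\<integral>\<^sup>+\<omega>. ennreal (exp (s / (1 - s * (\<sigma> t)\<^sup>2) * (L t)\<^sup>2 * (norm (Xp t \<omega> - x t))\<^sup>2 / 2)) \<partial>M)"
    if t: "t < T" and s: "s > 0" "s * (\<sigma> t)\<^sup>2 < 1" for t s
  proof -
    define G where "G y = f y (d t) t - f (x t) (d t) t" for y
    define c where "c = s / (1 - s * (\<sigma> t)\<^sup>2)"
    define A where "A = (1 - s * (\<sigma> t)\<^sup>2) powr (- real DIM('n) / 2)"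
    have c: "c > 0" using s by (simp add: c_def)
    have A: "A \<ge> 0" by (simp add: A_def)
    have Gm[measurable]: "G \<in> borel_measurable borel" unfolding G_def by measurable
    have GL: "norm (G y) \<le> L t * norm (y - x t)" for y unfolding G_def by (rule lip)
    define F where "F p = ennreal (exp (s * (norm (G (fst p) + snd p))\<^sup>2 / 2))" for p :: "'n \<times> 'n"
    have Fm: "F \<in> borel_measurable (borel \<Otimes>\<^sub>M borel)" unfolding F_def by measurable
    have "(\<integral>\<^sup>+\<omega>. ennreal (exp (s * (norm (Xp (Suc t) \<omega> - x (Suc t)))\<^sup>2 / 2)) \<partial>M)
        = (\<integral>\<^sup>+\<omega>. F (Xp t \<omega>, w t \<omega>) \<partial>M)"
    proof (rule nn_integral_cong)
      fix \<omega>
      have "Xp (Suc t) \<omega> - x (Suc t) = G (Xp t \<omega>) + w t \<omega>"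
        by (simp add: G_def XpS x_step[OF t] diff_add_eq)
      then show "ennreal (exp (s * (norm (Xp (Suc t) \<omega> - x (Suc t)))\<^sup>2 / 2)) = F (Xp t \<omega>, w t \<omega>)"
        by (simp add: F_def)
    qed
    also have "\<dots> = (\<integral>\<^sup>+\<omega>. (\<integral>\<^sup>+\<omega>'. F (Xp t \<omega>, w t \<omega>') \<partial>M) \<partial>M)"
      by (rule indep_integral[OF PM ind Fm])
    also have "\<dots> \<le> (\<integral>\<^sup>+\<omega>. ennreal (A * exp (c * (norm (G (Xp t \<omega>)))\<^sup>2 / 2)) \<partial>M)"
      unfolding F_def fst_conv snd_conv A_def c_def
      by (intro nn_integral_mono subG_quad[OF PM noise s])
    also have "\<dots> \<le> (\<integral>\<^sup>+\<omega>. ennreal A * ennreal (exp (c * (L t)\<^sup>2 * (norm (Xp t \<omega> - x t))\<^sup>2 / 2)) \<partial>M)"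
    proof (intro nn_integral_mono)
      fix \<omega>
      have "(norm (G (Xp t \<omega>)))\<^sup>2 \<le> (L t * norm (Xp t \<omega> - x t))\<^sup>2"
        using GL[of "Xp t \<omega>"] by (intro power_mono) auto
      then have "c * (norm (G (Xp t \<omega>)))\<^sup>2 \<le> c * (L t * norm (Xp t \<omega> - x t))\<^sup>2"
        using c by (intro mult_left_mono) auto
      then have "c * (norm (G (Xp t \<omega>)))\<^sup>2 / 2 \<le> c * (L t)\<^sup>2 * (norm (Xp t \<omega> - x t))\<^sup>2 / 2"
        by (simp add: power_mult_distrib mult.assoc)
      then have "A * exp (c * (norm (G (Xp t \<omega>)))\<^sup>2 / 2) \<le> A * exp (c * (L t)\<^sup>2 * (norm (Xp t \<omega> - x t))\<^sup>2 / 2)"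
        using A by (intro mult_left_mono) auto
      then have "ennreal (A * exp (c * (norm (G (Xp t \<omega>)))\<^sup>2 / 2)) \<le> ennreal (A * exp (c * (L t)\<^sup>2 * (norm (Xp t \<omega> - x t))\<^sup>2 / 2))"
        by (rule ennreal_leI)
      also have "\<dots> = ennreal A * ennreal (exp (c * (L t)\<^sup>2 * (norm (Xp t \<omega> - x t))\<^sup>2 / 2))"
        using A by (rule ennreal_mult')
      finally show "ennreal (A * exp (c * (norm (G (Xp t \<omega>)))\<^sup>2 / 2)) \<le> ennreal A * ennreal (exp (c * (L t)\<^sup>2 * (norm (Xp t \<omega> - x t))\<^sup>2 / 2))" .
    qed
    also have "\<dots> = ennreal A * (\<integral>\<^sup>+\<omega>. ennreal (exp (c * (L t)\<^sup>2 * (norm (Xp t \<omega> - x t))\<^sup>2 / 2)) \<partial>M)"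
      by (rule nn_integral_cmult) measurable
    finally show ?thesis unfolding c_def A_def .
  qed
  have mgf: "\<forall>s>0. s * Psi L \<sigma> t < 1 \<longrightarrow>
      (\<integral>\<^sup>+\<omega>. ennreal (exp (s * (norm (Xp t \<omega> - x t))\<^sup>2 / 2)) \<partial>M) \<le> ennreal ((1 - s * Psi L \<sigma> t) powr (- real DIM('n) / 2))"
    if "t \<le> T" for t
    using that
  proof (induction t)
    case 0
    show ?case by (simp add: Xp0 x_init emeasure_space_1 Psi_def)
  next
    case (Suc t)
    show ?case
    proof (intro allI impI)
      fix s :: real assume s: "s > 0" "s * Psi L \<sigma> (Suc t) < 1"
      have PS: "Psi L \<sigma> (Suc t) = (L t)\<^sup>2 * Psi L \<sigma> t + (\<sigma> t)\<^sup>2"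
        by (rule Psi_Suc) (rule L_pos[THEN less_imp_neq, THEN not_sym])
      have Pn: "Psi L \<sigma> t \<ge> 0" by (rule Psi_nonneg) (rule L_pos)
      have "s * ((L t)\<^sup>2 * Psi L \<sigma> t) \<ge> 0" using s Pn by simp
      then have s1: "s * (\<sigma> t)\<^sup>2 < 1" using s(2) unfolding PS by (simp add: algebra_simps)
      define s' where "s' = s / (1 - s * (\<sigma> t)\<^sup>2) * (L t)\<^sup>2"
      have s'0: "s' > 0" using s s1 L_pos[of t] by (simp add: s'_def)
      have s'1: "s' * Psi L \<sigma> t < 1"
      proof -
        have a: "s * ((L t)\<^sup>2 * Psi L \<sigma> t) < 1 - s * (\<sigma> t)\<^sup>2"
          using s(2) unfolding PS by (simp add: distrib_left)
        have "s * ((L t)\<^sup>2 * Psi L \<sigma> t) / (1 - s * (\<sigma> t)\<^sup>2) < 1"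
          using a s1 by (simp add: pos_divide_less_eq)
        moreover have "s' * Psi L \<sigma> t = s * ((L t)\<^sup>2 * Psi L \<sigma> t) / (1 - s * (\<sigma> t)\<^sup>2)"
          unfolding s'_def by simp
        ultimately show ?thesis by simp
      qed
      have IH: "(\<integral>\<^sup>+\<omega>. ennreal (exp (s' * (norm (Xp t \<omega> - x t))\<^sup>2 / 2)) \<partial>M)
           \<le> ennreal ((1 - s' * Psi L \<sigma> t) powr (- real DIM('n) / 2))"
        using Suc.IH Suc.prems s'0 s'1 by simp
      have "(\<integral>\<^sup>+\<omega>. ennreal (exp (s * (norm (Xp (Suc t) \<omega> - x (Suc t)))\<^sup>2 / 2)) \<partial>M)
          \<le> ennreal ((1 - s * (\<sigma> t)\<^sup>2) powr (- real DIM('n) / 2)) *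
            (\<integral>\<^sup>+\<omega>. ennreal (exp (s' * (norm (Xp t \<omega> - x t))\<^sup>2 / 2)) \<partial>M)"
        unfolding s'_def by (rule step) (use Suc.prems s s1 in auto)
      also have "\<dots> \<le> ennreal ((1 - s * (\<sigma> t)\<^sup>2) powr (- real DIM('n) / 2)) *
            ennreal ((1 - s' * Psi L \<sigma> t) powr (- real DIM('n) / 2))"
        using IH by (intro mult_left_mono) auto
      also have "\<dots> = ennreal ((1 - s * Psi L \<sigma> (Suc t)) powr (- real DIM('n) / 2))"
      proof -
        have "(1 - s * (\<sigma> t)\<^sup>2) * (1 - s' * Psi L \<sigma> t) = 1 - s * Psi L \<sigma> (Suc t)"
          using s1 unfolding s'_def PS by (simp add: field_simps)
        then have "(1 - s * (\<sigma> t)\<^sup>2) powr (- real DIM('n) / 2) * (1 - s' * Psi L \<sigma> t) powr (- real DIM('n) / 2)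
            = (1 - s * Psi L \<sigma> (Suc t)) powr (- real DIM('n) / 2)"
          using s1 s'1 by (simp add: powr_mult[symmetric])
        then show ?thesis by (simp add: ennreal_mult'[symmetric])
      qed
      finally show "(\<integral>\<^sup>+\<omega>. ennreal (exp (s * (norm (Xp (Suc t) \<omega> - x (Suc t)))\<^sup>2 / 2)) \<partial>M)
          \<le> ennreal ((1 - s * Psi L \<sigma> (Suc t)) powr (- real DIM('n) / 2))" .
    qed
  qed
  define B where "B t = {\<omega>\<in>space M. radius L \<sigma> DIM('n) \<epsilon> \<delta> T t < norm (Xp t \<omega> - x t)}" for t
  have Bm[measurable]: "B t \<in> sets M" for t unfolding B_def by measurable
  have tail: "emeasure M (B t) \<le> ennreal (\<delta> / real T)" if t: "1 \<le> t" "t \<le> T" for t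
  proof -
    define P where "P = Psi L \<sigma> t"
    define u where "u = (1 - \<epsilon>)\<^sup>2"
    define Q where "Q = eps1 \<epsilon> * real DIM('n) + eps2 \<epsilon> * ln (real T / \<delta>)"
    define s where "s = u / P"
    have P: "P > 0" unfolding P_def using L_pos \<sigma>_pos t(1) by (rule Psi_pos)
    have u0: "0 < u" using \<epsilon> by (simp add: u_def)
    have "(1-\<epsilon>)*(1-\<epsilon>) < 1 * 1" by (rule mult_strict_mono) (use \<epsilon> in auto)
    then have u1: "u < 1" by (simp add: u_def power2_eq_square)
    have sP: "s * P = u" using P by (simp add: s_def)
    have s0: "s > 0" using P u0 by (simp add: s_def)
    have rad: "radius L \<sigma> DIM('n) \<epsilon> \<delta> T t = sqrt (P * Q)"
      unfolding radius_def P_def Q_def ..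
    have mg: "(\<integral>\<^sup>+\<omega>. ennreal (exp (s * (norm (Xp t \<omega> - x t))\<^sup>2 / 2)) \<partial>M)
        \<le> ennreal ((1 - u) powr (- real DIM('n) / 2))"
      using mgf[OF t(2)] s0 sP u1 unfolding P_def by auto
    define c where "c = exp (- s * (sqrt (P * Q))\<^sup>2 / 2)"
    have Q: "Q \<ge> 0" unfolding Q_def by (rule Q_nonneg[OF \<epsilon> \<delta> T_pos])
    have c0: "c \<ge> 0" by (simp add: c_def)
    have sub: "B t \<subseteq> {\<omega>\<in>space M. 1 \<le> ennreal c * ennreal (exp (s * (norm (Xp t \<omega> - x t))\<^sup>2 / 2))}"
    proof safe
      fix \<omega> assume "\<omega> \<in> B t"
      then have \<omega>: "\<omega> \<in> space M" "sqrt (P * Q) < norm (Xp t \<omega> - x t)" unfolding B_def rad by auto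
      have r2: "(sqrt (P * Q))\<^sup>2 \<le> (norm (Xp t \<omega> - x t))\<^sup>2"
        using \<omega>(2) P Q by (intro power_mono) (auto simp: less_imp_le)
      show "\<omega> \<in> space M" by fact
      have "s * (sqrt (P * Q))\<^sup>2 \<le> s * (norm (Xp t \<omega> - x t))\<^sup>2"
        using r2 s0 by (intro mult_left_mono) auto
      then have "0 \<le> - s * (sqrt (P * Q))\<^sup>2 / 2 + s * (norm (Xp t \<omega> - x t))\<^sup>2 / 2"
        by simp
      then have "1 \<le> exp (- s * (sqrt (P * Q))\<^sup>2 / 2 + s * (norm (Xp t \<omega> - x t))\<^sup>2 / 2)"
        by simp
      then have "1 \<le> c * exp (s * (norm (Xp t \<omega> - x t))\<^sup>2 / 2)"
        unfolding c_def exp_add[symmetric] .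
      then have "ennreal 1 \<le> ennreal (c * exp (s * (norm (Xp t \<omega> - x t))\<^sup>2 / 2))"
        by (rule ennreal_leI)
      then show "1 \<le> ennreal c * ennreal (exp (s * (norm (Xp t \<omega> - x t))\<^sup>2 / 2))"
        using c0 by (simp add: ennreal_mult'[symmetric])
    qed
    have TR: "exp (- (u / P) * (sqrt (P * Q))\<^sup>2 / 2) * (1 - u) powr (- real DIM('n) / 2) \<le> \<delta> / real T"
      unfolding u_def Q_def by (rule tail_real[OF \<epsilon> \<delta> T_pos P])
    have "emeasure M (B t) \<le> emeasure M {\<omega>\<in>space M. 1 \<le> ennreal c * ennreal (exp (s * (norm (Xp t \<omega> - x t))\<^sup>2 / 2))}"
      by (rule emeasure_mono[OF sub]) measurable
    also have "\<dots> \<le> ennreal c * (\<integral>\<^sup>+\<omega>. ennreal (exp (s * (norm (Xp t \<omega> - x t))\<^sup>2 / 2)) * indicator (space M) \<omega> \<partial>M)"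
      by (rule nn_integral_Markov_inequality) measurable
    also have "(\<integral>\<^sup>+\<omega>. ennreal (exp (s * (norm (Xp t \<omega> - x t))\<^sup>2 / 2)) * indicator (space M) \<omega> \<partial>M)
        = (\<integral>\<^sup>+\<omega>. ennreal (exp (s * (norm (Xp t \<omega> - x t))\<^sup>2 / 2)) \<partial>M)"
      by (rule nn_integral_cong) simp
    also have "ennreal c * \<dots> \<le> ennreal c * ennreal ((1 - u) powr (- real DIM('n) / 2))"
      by (rule mult_left_mono[OF mg]) simp
    also have "\<dots> = ennreal (c * (1 - u) powr (- real DIM('n) / 2))"
      using c0 by (rule ennreal_mult'[symmetric])
    also have "\<dots> \<le> ennreal (\<delta> / real T)"
      unfolding c_def s_def by (rule ennreal_leI[OF TR])
    finally show ?thesis .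
  qed
  have r0: "radius L \<sigma> DIM('n) \<epsilon> \<delta> T 0 = 0" by (simp add: radius_def Psi_def)
  have good: "{\<omega> \<in> space M. \<forall>t\<le>T. norm (X t \<omega> - x t) \<le> radius L \<sigma> DIM('n) \<epsilon> \<delta> T t}
      = space M - (\<Union>t\<in>{1..T}. B t)"
  proof (intro set_eqI iffI)
    fix \<omega> assume "\<omega> \<in> {\<omega> \<in> space M. \<forall>t\<le>T. norm (X t \<omega> - x t) \<le> radius L \<sigma> DIM('n) \<epsilon> \<delta> T t}"
    then have sp: "\<omega> \<in> space M" and all: "\<And>t. t \<le> T \<Longrightarrow> norm (X t \<omega> - x t) \<le> radius L \<sigma> DIM('n) \<epsilon> \<delta> T t"
      by auto
    have "\<omega> \<notin> B t" if "t \<in> {1..T}" for t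
    proof -
      have tT: "t \<le> T" using that by simp
      have "norm (Xp t \<omega> - x t) \<le> radius L \<sigma> DIM('n) \<epsilon> \<delta> T t"
        using all[OF tT] XXp[OF tT sp] by simp
      then show ?thesis unfolding B_def by simp
    qed
    then show "\<omega> \<in> space M - (\<Union>t\<in>{1..T}. B t)" using sp by blast
  next
    fix \<omega> assume a: "\<omega> \<in> space M - (\<Union>t\<in>{1..T}. B t)"
    then have sp: "\<omega> \<in> space M" by simp
    have "norm (X t \<omega> - x t) \<le> radius L \<sigma> DIM('n) \<epsilon> \<delta> T t" if "t \<le> T" for t
    proof (cases "t = 0")
      case True
      then show ?thesis using sp by (simp add: X_init x_init r0)
    next
      case False
      then have "t \<in> {1..T}" using that by simp
      then have "\<omega> \<notin> B t" using a by blast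
      then show ?thesis using sp XXp[OF that sp] unfolding B_def by simp
    qed
    then show "\<omega> \<in> {\<omega> \<in> space M. \<forall>t\<le>T. norm (X t \<omega> - x t) \<le> radius L \<sigma> DIM('n) \<epsilon> \<delta> T t}"
      using sp by simp
  qed
  have UB: "(\<Union>t\<in>{1..T}. B t) \<in> sets M"
    by (rule sets.finite_UN) auto
  have mB: "measure M (B t) \<le> \<delta> / real T" if "t \<in> {1..T}" for t
  proof -
    have "ennreal (measure M (B t)) \<le> ennreal (\<delta> / real T)"
      using tail[of t] that by (simp add: emeasure_eq_measure)
    then show ?thesis using \<delta> by (simp add: ennreal_le_iff)
  qed
  have "measure M (\<Union>t\<in>{1..T}. B t) \<le> (\<Sum>t\<in>{1..T}. measure M (B t))"
    by (rule measure_UNION_le) auto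
  also have "\<dots> \<le> (\<Sum>t\<in>{1..T}. \<delta> / real T)"
    by (rule sum_mono) (rule mB)
  also have "\<dots> = \<delta>" using T_pos by simp
  finally have "measure M (\<Union>t\<in>{1..T}. B t) \<le> \<delta>" .
  then show ?thesis unfolding good using prob_compl[OF UB] by simp
qed

end
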